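(* Let $\alpha$ be a Riemannian metric and $\beta$ a nonzero closed $1$-form on an $n$-dimensional manifold $M$ such that ${}^\alpha R^i{}_j=\mu(\alpha^2\delta^i{}_j-y^iy_j)$ for a constant $\mu$ and $b_{i|j}=c(x)a_{ij}$ with $c^2=\kappa-\mu b^2$ for a constant $\kappa$ (where $b=\|\beta\|_\alpha$). Suppose that locally $M=\mathbb{R}\times\breve M$, where $\breve M$ is an $(n-1)$-dimensional manifold with a Riemannian metric $\breve\alpha$, and $$\alpha^2=dt\otimes dt+h^2(t)\,\breve\alpha^2,\qquad \beta=h(t)\,dt,$$ with $t$ the parameter of $\mathbb{R}$ and $h$ a function of $t$ only. Then $\breve\alpha$ is of constant sectional curvature $\kappa$.
   Context: ${}^\alpha R^i{}_j$ is the Riemann curvature tensor of $\alpha$, $y_j=a_{jk}y^k$ where $\alpha=\sqrt{a_{ij}y^iy^j}$, and $b_{i|j}$ are the coefficients of the covariant derivative of $\beta=b_iy^i$ with respect to $\alpha$. *)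

theory Defs
  imports "HOL-Analysis.Analysis"
begin

text \<open>Local coordinate calculus on an open set of real^'n ('n a finite index type).
  A Riemannian metric is given by its component matrix a x, a 1-form by its
  component vector b x.\<close>

definition pd :: "(real^'n \<Rightarrow> real) \<Rightarrow> 'n \<Rightarrow> real^'n \<Rightarrow> real" where
  "pd f k x = deriv (\<lambda>s. f (x + s *\<^sub>R axis k 1)) 0"

fun pds :: "'n list \<Rightarrow> (real^'n \<Rightarrow> real) \<Rightarrow> real^'n \<Rightarrow> real" where
  "pds [] f = f"
| "pds (k # ks) f = pd (pds ks f) k"

definition smooth_fun_on :: "(real^'n) set \<Rightarrow> (real^'n \<Rightarrow> real) \<Rightarrow> bool" where
  "smooth_fun_on U f \<longleftrightarrow>
     (\<forall>ks. continuous_on U (pds ks f) \<and>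
        (\<forall>k. \<forall>x\<in>U. (\<lambda>s. pds ks f (x + s *\<^sub>R axis k 1)) differentiable (at 0)))"

definition riemannian_metric_on :: "(real^'n) set \<Rightarrow> (real^'n \<Rightarrow> real^'n^'n) \<Rightarrow> bool" where
  "riemannian_metric_on U a \<longleftrightarrow> open U \<and>
     (\<forall>i j. smooth_fun_on U (\<lambda>x. a x $ i $ j)) \<and>
     (\<forall>x\<in>U. \<forall>i j. a x $ i $ j = a x $ j $ i) \<and>
     (\<forall>x\<in>U. \<forall>v. v \<noteq> 0 \<longrightarrow> (\<Sum>i\<in>UNIV. \<Sum>j\<in>UNIV. a x $ i $ j * v $ i * v $ j) > 0)"

definition inv_metric :: "(real^'n \<Rightarrow> real^'n^'n) \<Rightarrow> real^'n \<Rightarrow> real^'n^'n" where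
  "inv_metric a x = matrix_inv (a x)"

definition christoffel :: "(real^'n \<Rightarrow> real^'n^'n) \<Rightarrow> 'n \<Rightarrow> 'n \<Rightarrow> 'n \<Rightarrow> real^'n \<Rightarrow> real" where
  "christoffel a k i j x = (1/2) * (\<Sum>l\<in>UNIV. inv_metric a x $ k $ l *
      (pd (\<lambda>z. a z $ j $ l) i x + pd (\<lambda>z. a z $ i $ l) j x - pd (\<lambda>z. a z $ i $ j) l x))"

text \<open>Riemann tensor R^i_{jkl} = d_k Gamma^i_{jl} - d_l Gamma^i_{jk}
   + Gamma^i_{km} Gamma^m_{jl} - Gamma^i_{lm} Gamma^m_{jk},
   so that R(d_k, d_l) d_j = R^i_{jkl} d_i.\<close>
definition riemann :: "(real^'n \<Rightarrow> real^'n^'n) \<Rightarrow> 'n \<Rightarrow> 'n \<Rightarrow> 'n \<Rightarrow> 'n \<Rightarrow> real^'n \<Rightarrow> real" where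
  "riemann a i j k l x =
     pd (christoffel a i j l) k x - pd (christoffel a i j k) l x
     + (\<Sum>m\<in>UNIV. christoffel a i k m x * christoffel a m j l x
                 - christoffel a i l m x * christoffel a m j k x)"

text \<open>Riemann curvature R^i_j(x,y) of alpha (R_y(v) = R(v,y)y), in Finsler notation:
   R^i_j = R^i_{k j l} y^k y^l.\<close>
definition riemann_curv :: "(real^'n \<Rightarrow> real^'n^'n) \<Rightarrow> 'n \<Rightarrow> 'n \<Rightarrow> real^'n \<Rightarrow> real^'n \<Rightarrow> real" where
  "riemann_curv a i j x y = (\<Sum>k\<in>UNIV. \<Sum>l\<in>UNIV. riemann a i k j l x * y $ k * y $ l)"

definition metric_ip :: "(real^'n \<Rightarrow> real^'n^'n) \<Rightarrow> real^'n \<Rightarrow> real^'n \<Rightarrow> real^'n \<Rightarrow> real" where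
  "metric_ip a x u v = (\<Sum>i\<in>UNIV. \<Sum>j\<in>UNIV. a x $ i $ j * u $ i * v $ j)"

definition lower :: "(real^'n \<Rightarrow> real^'n^'n) \<Rightarrow> real^'n \<Rightarrow> real^'n \<Rightarrow> 'n \<Rightarrow> real" where
  "lower a x y j = (\<Sum>k\<in>UNIV. a x $ j $ k * y $ k)"

definition cov_deriv_1form :: "(real^'n \<Rightarrow> real^'n^'n) \<Rightarrow> (real^'n \<Rightarrow> real^'n) \<Rightarrow> 'n \<Rightarrow> 'n \<Rightarrow> real^'n \<Rightarrow> real" where
  "cov_deriv_1form a b i j x = pd (\<lambda>z. b z $ i) j x - (\<Sum>k\<in>UNIV. christoffel a k i j x * b x $ k)"

definition norm2_1form :: "(real^'n \<Rightarrow> real^'n^'n) \<Rightarrow> (real^'n \<Rightarrow> real^'n) \<Rightarrow> real^'n \<Rightarrow> real" where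
  "norm2_1form a b x = (\<Sum>i\<in>UNIV. \<Sum>j\<in>UNIV. inv_metric a x $ i $ j * b x $ i * b x $ j)"

definition closed_1form_on :: "(real^'n) set \<Rightarrow> (real^'n \<Rightarrow> real^'n) \<Rightarrow> bool" where
  "closed_1form_on U b \<longleftrightarrow> (\<forall>x\<in>U. \<forall>i j. pd (\<lambda>z. b z $ j) i x = pd (\<lambda>z. b z $ i) j x)"

definition sectional_curvature :: "(real^'n \<Rightarrow> real^'n^'n) \<Rightarrow> real^'n \<Rightarrow> real^'n \<Rightarrow> real^'n \<Rightarrow> real" where
  "sectional_curvature a x u v =
     (\<Sum>i\<in>UNIV. \<Sum>m\<in>UNIV. \<Sum>p\<in>UNIV. \<Sum>q\<in>UNIV. \<Sum>r\<in>UNIV.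
        a x $ i $ m * riemann a m r p q x * u $ i * u $ p * v $ q * v $ r)
     / (metric_ip a x u u * metric_ip a x v v - (metric_ip a x u v)^2)"

definition const_sectional_curvature_on :: "(real^'n) set \<Rightarrow> (real^'n \<Rightarrow> real^'n^'n) \<Rightarrow> real \<Rightarrow> bool" where
  "const_sectional_curvature_on U a K \<longleftrightarrow>
     (\<forall>x\<in>U. \<forall>u v. (\<forall>s t. s *\<^sub>R u + t *\<^sub>R v = 0 \<longrightarrow> s = 0 \<and> t = 0)
        \<longrightarrow> sectional_curvature a x u v = K)"

text \<open>Coordinates on R x M-breve: index type 'm option, None = t-direction.\<close>
definition tcoord :: "real^('m::finite option) \<Rightarrow> real" where
  "tcoord x = x $ None"

definition fibre_coord :: "real^('m::finite option) \<Rightarrow> real^'m" where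
  "fibre_coord x = (\<chi> i. x $ Some i)"

end

theory Submission
  imports Defs
begin


lemma sum_option:
  fixes f :: "'m::finite option \<Rightarrow> 'a::comm_monoid_add"
  shows "(\<Sum>i\<in>UNIV. f i) = f None + (\<Sum>p\<in>UNIV. f (Some p))"
  by (simp add: UNIV_option_conv sum.reindex)

lemma pd_local:
  fixes f g :: "real^'n \<Rightarrow> real"
  assumes "open S" "x \<in> S" "\<forall>z\<in>S. f z = g z"
  shows "pd f k x = pd g k x"
proof -
  let ?T = "(\<lambda>s::real. x + s *\<^sub>R axis k 1) -` S"
  have oT: "open ?T"
    by (rule open_vimage[OF assms(1)]) (intro continuous_intros)
  have 0: "0 \<in> ?T" using assms(2) by simp
  have "\<And>D. ((\<lambda>s. f (x + s *\<^sub>R axis k 1)) has_field_derivative D) (at 0) \<longleftrightarrow>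
             ((\<lambda>s. g (x + s *\<^sub>R axis k 1)) has_field_derivative D) (at 0)"
  proof
    fix D assume "((\<lambda>s. f (x + s *\<^sub>R axis k 1)) has_field_derivative D) (at 0)"
    then show "((\<lambda>s. g (x + s *\<^sub>R axis k 1)) has_field_derivative D) (at 0)"
      by (rule has_field_derivative_transform_within_open[OF _ oT 0]) (simp add: assms(3))
  next
    fix D assume "((\<lambda>s. g (x + s *\<^sub>R axis k 1)) has_field_derivative D) (at 0)"
    then show "((\<lambda>s. f (x + s *\<^sub>R axis k 1)) has_field_derivative D) (at 0)"
      by (rule has_field_derivative_transform_within_open[OF _ oT 0]) (simp add: assms(3))
  qed
  then show ?thesis unfolding pd_def deriv_def by simp
qed

lemma matrix_inv_eq:
  fixes A B :: "real^'n^'n"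
  assumes "A ** B = mat 1" "B ** A = mat 1"
  shows "matrix_inv A = B"
  unfolding matrix_inv_def
proof (rule some_equality)
  show "A ** B = mat 1 \<and> B ** A = mat 1" using assms by simp
  fix C assume "A ** C = mat 1 \<and> C ** A = mat 1"
  then have "C = (B ** A) ** C" using assms by (simp add: matrix_mul_lid)
  also have "\<dots> = B" using \<open>A ** C = mat 1 \<and> C ** A = mat 1\<close>
    by (simp add: matrix_mul_assoc[symmetric] matrix_mul_rid)
  finally show "C = B" .
qed

lemma posdef_inv:
  fixes A :: "real^'n^'n"
  assumes "\<forall>v. v \<noteq> 0 \<longrightarrow> (\<Sum>i\<in>UNIV. \<Sum>j\<in>UNIV. A $ i $ j * v $ i * v $ j) > 0"
  shows "matrix_inv A ** A = mat 1" "A ** matrix_inv A = mat 1"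
proof -
  have "\<forall>x. A *v x = 0 \<longrightarrow> x = 0"
  proof (intro allI impI)
    fix x assume h: "A *v x = 0"
    have "(\<Sum>i\<in>UNIV. \<Sum>j\<in>UNIV. A $ i $ j * x $ i * x $ j) = (\<Sum>i\<in>UNIV. x $ i * (A *v x) $ i)"
      by (simp add: matrix_vector_mult_def sum_distrib_left mult_ac)
    also have "\<dots> = 0" using h by simp
    finally show "x = 0" using assms by force
  qed
  then have "invertible A" using matrix_left_invertible_ker invertible_left_inverse by blast
  then obtain B where "A ** B = mat 1" "B ** A = mat 1" unfolding invertible_def by blast
  then show "matrix_inv A ** A = mat 1" "A ** matrix_inv A = mat 1"
    using matrix_inv_eq by auto
qed

lemma tcoord_add_None: "tcoord (x + s *\<^sub>R axis None 1) = tcoord x + s"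
  by (simp add: tcoord_def axis_def)
lemma tcoord_add_Some: "tcoord (x + s *\<^sub>R axis (Some k) 1) = tcoord x"
  by (simp add: tcoord_def axis_def)
lemma fibre_add_None: "fibre_coord (x + s *\<^sub>R axis None 1) = fibre_coord x"
  by (simp add: fibre_coord_def axis_def vec_eq_iff)
lemma fibre_add_Some: "fibre_coord (x + s *\<^sub>R axis (Some k) 1) = fibre_coord x + s *\<^sub>R axis k 1"
  by (simp add: fibre_coord_def axis_def vec_eq_iff)

lemma pd_fibre: "pd (\<lambda>z. F (fibre_coord z)) (Some k) x = pd F k (fibre_coord x)"
  by (simp add: pd_def fibre_add_Some)

lemma pd_const: "pd (\<lambda>z. c) k x = 0"
  by (simp add: pd_def)

lemma deriv_at0_cmult:
  assumes "(f :: real \<Rightarrow> real) differentiable (at 0)"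
  shows "deriv (\<lambda>s. c * f s) 0 = c * deriv f 0"
proof -
  obtain D where D: "(f has_real_derivative D) (at 0)" using assms real_differentiableE by blast
  have "((\<lambda>s. c * f s) has_real_derivative c * D) (at 0)" using D by (intro derivative_eq_intros) auto
  then show ?thesis using D by (simp add: DERIV_imp_deriv)
qed

lemma mkpt:
  fixes y :: "real^'m::finite" and t :: real
  defines "x \<equiv> (\<chi> i. case i of None \<Rightarrow> t | Some p \<Rightarrow> y $ p) :: real^('m option)"
  shows "tcoord x = t" "fibre_coord x = y"
  by (simp_all add: x_def tcoord_def fibre_coord_def vec_eq_iff)



theorem lemma3p2:
  fixes a :: "real^('m::finite option) \<Rightarrow> real^('m option)^('m option)"
    and b :: "real^('m option) \<Rightarrow> real^('m option)"
    and ab :: "real^'m \<Rightarrow> real^'m^'m"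
    and h :: "real \<Rightarrow> real"
    and I :: "real set" and V :: "(real^'m) set"
    and U :: "(real^('m option)) set"
    and \<mu> \<kappa> :: real
  assumes I: "open I" "I \<noteq> {}"
    and V: "open V"
    and U: "U = {x. tcoord x \<in> I \<and> fibre_coord x \<in> V}"
    and alpha: "riemannian_metric_on U a"
    and alpha_breve: "riemannian_metric_on V ab"
    and beta_smooth: "\<forall>i. smooth_fun_on U (\<lambda>x. b x $ i)"
    and beta_nonzero: "\<exists>x\<in>U. b x \<noteq> 0"
    and beta_closed: "closed_1form_on U b"
    and curv: "\<forall>x\<in>U. \<forall>y i j. riemann_curv a i j x y =
                 \<mu> * (metric_ip a x y y * (if i = j then 1 else 0) - y $ i * lower a x y j)"
    and cov: "\<exists>c::real^('m option) \<Rightarrow> real. \<forall>x\<in>U.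
                 (\<forall>i j. cov_deriv_1form a b i j x = c x * a x $ i $ j)
                 \<and> (c x)^2 = \<kappa> - \<mu> * norm2_1form a b x"
    and warped: "\<forall>x\<in>U. \<forall>i j. a x $ i $ j =
                 (case (i, j) of
                    (None, None) \<Rightarrow> 1
                  | (Some p, Some q) \<Rightarrow> (h (tcoord x))^2 * ab (fibre_coord x) $ p $ q
                  | _ \<Rightarrow> 0)"
    and beta_form: "\<forall>x\<in>U. \<forall>i. b x $ i = (if i = None then h (tcoord x) else 0)"
  shows "const_sectional_curvature_on V ab \<kappa>"
proof -
  have oU: "open U" using alpha unfolding riemannian_metric_on_def by blast
  have apos: "\<And>x v. x \<in> U \<Longrightarrow> v \<noteq> 0 \<Longrightarrow> (\<Sum>i\<in>UNIV. \<Sum>j\<in>UNIV. a x $ i $ j * v $ i * v $ j) > 0"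
    using alpha unfolding riemannian_metric_on_def by blast
  have abpos: "\<And>y v. y \<in> V \<Longrightarrow> v \<noteq> 0 \<Longrightarrow> (\<Sum>i\<in>UNIV. \<Sum>j\<in>UNIV. ab y $ i $ j * v $ i * v $ j) > 0"
    using alpha_breve unfolding riemannian_metric_on_def by blast
  have absym: "\<And>y i j. y \<in> V \<Longrightarrow> ab y $ i $ j = ab y $ j $ i"
    using alpha_breve unfolding riemannian_metric_on_def by blast
  have absm: "\<And>i j k y. y \<in> V \<Longrightarrow> (\<lambda>s. ab (y + s *\<^sub>R axis k 1) $ i $ j) differentiable (at 0)"
  proof -
    fix i j k y assume "y \<in> V"
    have "smooth_fun_on V (\<lambda>x. ab x $ i $ j)" using alpha_breve unfolding riemannian_metric_on_def by blast
    then have "\<forall>k. \<forall>x\<in>V. (\<lambda>s. pds [] (\<lambda>x. ab x $ i $ j) (x + s *\<^sub>R axis k 1)) differentiable (at 0)"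
      unfolding smooth_fun_on_def by blast
    then show "(\<lambda>s. ab (y + s *\<^sub>R axis k 1) $ i $ j) differentiable (at 0)" using \<open>y \<in> V\<close> by simp
  qed
  have xU: "\<And>x. x \<in> U \<Longrightarrow> tcoord x \<in> I \<and> fibre_coord x \<in> V" using U by blast
  have aNN: "\<And>x. x \<in> U \<Longrightarrow> a x $ None $ None = 1" using warped by simp
  have aNx: "\<And>x j. x \<in> U \<Longrightarrow> a x $ None $ j = (if j = None then 1 else 0)"
    using warped by (auto split: option.split)
  have axN: "\<And>x j. x \<in> U \<Longrightarrow> a x $ j $ None = (if j = None then 1 else 0)"
    using warped by (auto split: option.split)
  have aSS: "\<And>x p q. x \<in> U \<Longrightarrow> a x $ Some p $ Some q = (h (tcoord x))^2 * ab (fibre_coord x) $ p $ q"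
    using warped by simp
  have hne: "\<And>x. x \<in> U \<Longrightarrow> h (tcoord x) \<noteq> 0"
  proof
    fix x assume xu: "x \<in> U" and h0: "h (tcoord x) = 0"
    define v :: "real^('m option)" where "v = axis (Some undefined) 1"
    have "v \<noteq> 0" unfolding v_def by (simp add: axis_eq_0_iff)
    have "(\<Sum>i\<in>UNIV. \<Sum>j\<in>UNIV. a x $ i $ j * v $ i * v $ j) = a x $ Some undefined $ Some undefined"
      unfolding v_def by (simp add: axis_def if_distrib[of "\<lambda>z. _ * z"] cong: if_cong)
    also have "\<dots> = 0" using aSS[OF xu] h0 by simp
    finally show False using apos[OF xu \<open>v \<noteq> 0\<close>] by simp
  qed
  define h' where "h' = deriv h"
  have hder: "\<And>x. x \<in> U \<Longrightarrow> (h has_real_derivative h' (tcoord x)) (at (tcoord x))"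
  proof -
    fix x assume xu: "x \<in> U"
    have "smooth_fun_on U (\<lambda>x. b x $ None)" using beta_smooth by blast
    then have "\<forall>k. \<forall>x\<in>U. (\<lambda>s. pds [] (\<lambda>x. b x $ None) (x + s *\<^sub>R axis k 1)) differentiable (at 0)"
      unfolding smooth_fun_on_def by blast
    then have "(\<lambda>s. b (x + s *\<^sub>R axis None 1) $ None) differentiable (at 0)" using xu by simp
    then obtain D where D: "((\<lambda>s. b (x + s *\<^sub>R axis None 1) $ None) has_real_derivative D) (at 0)"
      using real_differentiableE by blast
    let ?T = "(\<lambda>s::real. x + s *\<^sub>R axis None 1) -` U"
    have oT: "open ?T"
      by (rule open_vimage[OF oU]) (intro continuous_intros)
    have 0: "0 \<in> ?T" using xu by simp
    have "((\<lambda>s. h (s + tcoord x)) has_real_derivative D) (at 0)"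
      by (rule has_field_derivative_transform_within_open[OF D oT 0])
         (simp add: beta_form tcoord_add_None add.commute)
    then have "(h has_real_derivative D) (at (0 + tcoord x))" using DERIV_shift by blast
    then have Dh: "(h has_real_derivative D) (at (tcoord x))" by simp
    then have "h' (tcoord x) = D" unfolding h'_def by (rule DERIV_imp_deriv)
    then show "(h has_real_derivative h' (tcoord x)) (at (tcoord x))" using Dh by simp
  qed
  have P0: "\<And>x k j. x \<in> U \<Longrightarrow> pd (\<lambda>z. a z $ None $ j) k x = 0"
  proof -
    fix x k j assume xu: "x \<in> U"
    have "pd (\<lambda>z. a z $ None $ j) k x = pd (\<lambda>z. if j = None then 1 else 0) k x"
      by (rule pd_local[OF oU xu]) (simp add: aNx)
    then show "pd (\<lambda>z. a z $ None $ j) k x = 0" by (simp add: pd_const)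
  qed
  have P0': "\<And>x k j. x \<in> U \<Longrightarrow> pd (\<lambda>z. a z $ j $ None) k x = 0"
  proof -
    fix x k j assume xu: "x \<in> U"
    have "pd (\<lambda>z. a z $ j $ None) k x = pd (\<lambda>z. if j = None then 1 else 0) k x"
      by (rule pd_local[OF oU xu]) (simp add: axN)
    then show "pd (\<lambda>z. a z $ j $ None) k x = 0" by (simp add: pd_const)
  qed
  have PSN: "\<And>x p q. x \<in> U \<Longrightarrow> pd (\<lambda>z. a z $ Some p $ Some q) None x
      = 2 * h (tcoord x) * h' (tcoord x) * ab (fibre_coord x) $ p $ q"
  proof -
    fix x p q assume xu: "x \<in> U"
    have "pd (\<lambda>z. a z $ Some p $ Some q) None x = pd (\<lambda>z. h (tcoord z)^2 * ab (fibre_coord z) $ p $ q) None x"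
      by (rule pd_local[OF oU xu]) (simp add: aSS)
    also have "\<dots> = deriv (\<lambda>s. h (tcoord x + s)^2 * ab (fibre_coord x) $ p $ q) 0"
      by (simp add: pd_def tcoord_add_None fibre_add_None)
    also have "\<dots> = 2 * h (tcoord x) * h' (tcoord x) * ab (fibre_coord x) $ p $ q"
    proof (rule DERIV_imp_deriv)
      have hs: "((\<lambda>s. h (tcoord x + s)) has_real_derivative h' (tcoord x)) (at 0)"
        using DERIV_shift[of h "h' (tcoord x)" 0 "tcoord x"] hder[OF xu] by (simp add: add.commute)
      show "((\<lambda>s. h (tcoord x + s)^2 * ab (fibre_coord x) $ p $ q) has_real_derivative
          2 * h (tcoord x) * h' (tcoord x) * ab (fibre_coord x) $ p $ q) (at 0)"
        by (auto intro!: derivative_eq_intros hs)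
    qed
    finally show "pd (\<lambda>z. a z $ Some p $ Some q) None x
      = 2 * h (tcoord x) * h' (tcoord x) * ab (fibre_coord x) $ p $ q" .
  qed
  have PSS: "\<And>x p q k. x \<in> U \<Longrightarrow> pd (\<lambda>z. a z $ Some p $ Some q) (Some k) x
      = h (tcoord x)^2 * pd (\<lambda>w. ab w $ p $ q) k (fibre_coord x)"
  proof -
    fix x p q k assume xu: "x \<in> U"
    have "pd (\<lambda>z. a z $ Some p $ Some q) (Some k) x = pd (\<lambda>z. h (tcoord z)^2 * ab (fibre_coord z) $ p $ q) (Some k) x"
      by (rule pd_local[OF oU xu]) (simp add: aSS)
    also have "\<dots> = deriv (\<lambda>s. h (tcoord x)^2 * ab (fibre_coord x + s *\<^sub>R axis k 1) $ p $ q) 0"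
      by (simp add: pd_def tcoord_add_Some fibre_add_Some)
    also have "\<dots> = h (tcoord x)^2 * pd (\<lambda>w. ab w $ p $ q) k (fibre_coord x)"
      unfolding pd_def by (rule deriv_at0_cmult[OF absm]) (use xU[OF xu] in blast)
    finally show "pd (\<lambda>z. a z $ Some p $ Some q) (Some k) x
      = h (tcoord x)^2 * pd (\<lambda>w. ab w $ p $ q) k (fibre_coord x)" .
  qed
  have abinvL: "\<And>y r p. y \<in> V \<Longrightarrow> (\<Sum>s\<in>UNIV. matrix_inv (ab y) $ r $ s * ab y $ s $ p) = (if r = p then 1 else 0)"
  proof -
    fix y r p assume yv: "y \<in> V"
    have "matrix_inv (ab y) ** ab y = mat 1" using posdef_inv(1) abpos[OF yv] by blast
    then have "(matrix_inv (ab y) ** ab y) $ r $ p = mat 1 $ r $ p" by simp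
    then show "(\<Sum>s\<in>UNIV. matrix_inv (ab y) $ r $ s * ab y $ s $ p) = (if r = p then 1 else 0)"
      by (simp add: matrix_matrix_mult_def mat_def)
  qed
  have abinvR: "\<And>y r p. y \<in> V \<Longrightarrow> (\<Sum>s\<in>UNIV. ab y $ r $ s * matrix_inv (ab y) $ s $ p) = (if r = p then 1 else 0)"
  proof -
    fix y r p assume yv: "y \<in> V"
    have "ab y ** matrix_inv (ab y) = mat 1" using posdef_inv(2) abpos[OF yv] by blast
    then have "(ab y ** matrix_inv (ab y)) $ r $ p = mat 1 $ r $ p" by simp
    then show "(\<Sum>s\<in>UNIV. ab y $ r $ s * matrix_inv (ab y) $ s $ p) = (if r = p then 1 else 0)"
      by (simp add: matrix_matrix_mult_def mat_def)
  qed
  define Bi where "Bi x = (\<chi> i j. case i of None \<Rightarrow> (if j = None then 1 else 0)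
      | Some r \<Rightarrow> (case j of None \<Rightarrow> 0 | Some s \<Rightarrow> matrix_inv (ab (fibre_coord x)) $ r $ s / h (tcoord x)^2))"
    for x :: "real^('m option)"
  have invE: "\<And>x. x \<in> U \<Longrightarrow> inv_metric a x = Bi x"
  proof -
    fix x assume xu: "x \<in> U"
    let ?y = "fibre_coord x" and ?t = "tcoord x"
    have yv: "?y \<in> V" using xU[OF xu] by blast
    have h2: "h ?t ^ 2 \<noteq> 0" using hne[OF xu] by simp
    have "a x ** Bi x = mat 1"
    proof -
      have "(a x ** Bi x) $ i $ j = mat 1 $ i $ j" for i j
      proof (cases i)
        case None then show ?thesis
          by (simp add: matrix_matrix_mult_def mat_def sum_option aNx Bi_def xu)
      next
        case (Some p)
        show ?thesis
        proof (cases j)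
          case None then show ?thesis using Some
            by (simp add: matrix_matrix_mult_def mat_def sum_option axN Bi_def xu)
        next
          case (Some q)
          have "(\<Sum>s\<in>UNIV. a x $ Some p $ Some s * Bi x $ Some s $ Some q)
              = (\<Sum>s\<in>UNIV. ab ?y $ p $ s * matrix_inv (ab ?y) $ s $ q)"
            by (rule sum.cong) (simp_all add: aSS[OF xu] Bi_def hne[OF xu])
          then show ?thesis using \<open>i = Some p\<close> Some
            by (simp add: matrix_matrix_mult_def mat_def sum_option axN xu abinvR[OF yv])
        qed
      qed
      then show ?thesis by (simp add: vec_eq_iff)
    qed
    moreover have "Bi x ** a x = mat 1"
    proof -
      have "(Bi x ** a x) $ i $ j = mat 1 $ i $ j" for i j
      proof (cases i)
        case None then show ?thesis
          by (simp add: matrix_matrix_mult_def mat_def sum_option aNx Bi_def xu)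
      next
        case (Some p)
        show ?thesis
        proof (cases j)
          case None then show ?thesis using Some
            by (simp add: matrix_matrix_mult_def mat_def sum_option axN Bi_def xu)
        next
          case (Some q)
          have "(\<Sum>s\<in>UNIV. Bi x $ Some p $ Some s * a x $ Some s $ Some q)
              = (\<Sum>s\<in>UNIV. matrix_inv (ab ?y) $ p $ s * ab ?y $ s $ q)"
            by (rule sum.cong) (simp_all add: aSS[OF xu] Bi_def hne[OF xu])
          then show ?thesis using \<open>i = Some p\<close> Some
            by (simp add: matrix_matrix_mult_def mat_def sum_option aNx xu abinvL[OF yv] Bi_def)
        qed
      qed
      then show ?thesis by (simp add: vec_eq_iff)
    qed
    ultimately show "inv_metric a x = Bi x" unfolding inv_metric_def by (rule matrix_inv_eq)
  qed
  have iNx: "\<And>x j. x \<in> U \<Longrightarrow> inv_metric a x $ None $ j = (if j = None then 1 else 0)"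
    by (simp add: invE Bi_def)
  have iSN: "\<And>x r. x \<in> U \<Longrightarrow> inv_metric a x $ Some r $ None = 0"
    by (simp add: invE Bi_def)
  have iSS: "\<And>x r s. x \<in> U \<Longrightarrow> inv_metric a x $ Some r $ Some s
      = inv_metric ab (fibre_coord x) $ r $ s / h (tcoord x)^2"
    by (simp add: invE Bi_def) (simp add: inv_metric_def)
  have C1: "\<And>x r p q. x \<in> U \<Longrightarrow> christoffel a (Some r) (Some p) (Some q) x = christoffel ab r p q (fibre_coord x)"
  proof -
    fix x r p q assume xu: "x \<in> U"
    let ?y = "fibre_coord x"
    have "(\<Sum>l\<in>UNIV. inv_metric a x $ Some r $ l * (pd (\<lambda>z. a z $ Some q $ l) (Some p) x
        + pd (\<lambda>z. a z $ Some p $ l) (Some q) x - pd (\<lambda>z. a z $ Some p $ Some q) l x))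
      = (\<Sum>s\<in>UNIV. inv_metric ab ?y $ r $ s * (pd (\<lambda>z. ab z $ q $ s) p ?y
        + pd (\<lambda>z. ab z $ p $ s) q ?y - pd (\<lambda>z. ab z $ p $ q) s ?y))"
      unfolding sum_option
      by (simp add: iSN[OF xu]) (rule sum.cong, simp_all add: iSS[OF xu] PSS[OF xu] field_simps hne[OF xu])
    then show "christoffel a (Some r) (Some p) (Some q) x = christoffel ab r p q (fibre_coord x)"
      unfolding christoffel_def by simp
  qed
  have C2: "\<And>x p q. x \<in> U \<Longrightarrow> christoffel a None (Some p) (Some q) x
      = - h (tcoord x) * h' (tcoord x) * ab (fibre_coord x) $ p $ q"
    unfolding christoffel_def sum_option by (simp add: iNx P0' PSN)
  have C3: "\<And>x r p. x \<in> U \<Longrightarrow> christoffel a (Some r) (Some p) None x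
      = (if r = p then h' (tcoord x) / h (tcoord x) else 0)"
  proof -
    fix x r p assume xu: "x \<in> U"
    let ?y = "fibre_coord x" and ?t = "tcoord x"
    have yv: "?y \<in> V" using xU[OF xu] by blast
    have "(\<Sum>l\<in>UNIV. inv_metric a x $ Some r $ l * (pd (\<lambda>z. a z $ None $ l) (Some p) x
        + pd (\<lambda>z. a z $ Some p $ l) None x - pd (\<lambda>z. a z $ Some p $ None) l x))
      = (\<Sum>s\<in>UNIV. (2 * h' ?t / h ?t) * (matrix_inv (ab ?y) $ r $ s * ab ?y $ s $ p))"
      unfolding sum_option
      by (simp add: iSN[OF xu] P0[OF xu] P0'[OF xu])
         (rule sum.cong, simp_all only: iSS[OF xu] PSN[OF xu] absym[OF yv, of p], simp add: inv_metric_def power2_eq_square hne[OF xu])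
    also have "\<dots> = (2 * h' ?t / h ?t) * (if r = p then 1 else 0)"
      unfolding sum_distrib_left[symmetric] abinvL[OF yv] by simp
    finally show "christoffel a (Some r) (Some p) None x = (if r = p then h' (tcoord x) / h (tcoord x) else 0)"
      unfolding christoffel_def by simp
  qed
  have C4: "\<And>x. x \<in> U \<Longrightarrow> christoffel a None None None x = 0"
    unfolding christoffel_def sum_option by (simp add: iNx P0 P0')
  have R: "\<And>x m r p q. x \<in> U \<Longrightarrow> riemann a (Some m) (Some r) (Some p) (Some q) x
     = riemann ab m r p q (fibre_coord x) - h' (tcoord x)^2 *
       ((if m = p then ab (fibre_coord x) $ r $ q else 0) - (if m = q then ab (fibre_coord x) $ r $ p else 0))"
  proof -
    fix x m r p q assume xu: "x \<in> U"
    let ?y = "fibre_coord x" and ?t = "tcoord x"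
    have pdc: "pd (christoffel a (Some m) (Some r) (Some l)) (Some k) x = pd (christoffel ab m r l) k ?y" for l k
    proof -
      have "pd (christoffel a (Some m) (Some r) (Some l)) (Some k) x
          = pd (\<lambda>z. christoffel ab m r l (fibre_coord z)) (Some k) x"
        by (rule pd_local[OF oU xu]) (simp add: C1)
      then show ?thesis by (simp add: pd_fibre)
    qed
    have S: "(\<Sum>n\<in>UNIV. christoffel a (Some m) (Some p) n x * christoffel a n (Some r) (Some q) x
                 - christoffel a (Some m) (Some q) n x * christoffel a n (Some r) (Some p) x)
        = (\<Sum>n\<in>UNIV. christoffel ab m p n ?y * christoffel ab n r q ?y
                 - christoffel ab m q n ?y * christoffel ab n r p ?y)
          - h' ?t^2 * ((if m = p then ab ?y $ r $ q else 0) - (if m = q then ab ?y $ r $ p else 0))"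
      unfolding sum_option using hne[OF xu]
      by (simp add: C1[OF xu] C2[OF xu] C3[OF xu] power2_eq_square)
    show "riemann a (Some m) (Some r) (Some p) (Some q) x
     = riemann ab m r p q (fibre_coord x) - h' (tcoord x)^2 *
       ((if m = p then ab (fibre_coord x) $ r $ q else 0) - (if m = q then ab (fibre_coord x) $ r $ p else 0))"
      unfolding riemann_def S pdc by simp
  qed
  obtain c where c: "\<forall>x\<in>U. (\<forall>i j. cov_deriv_1form a b i j x = c x * a x $ i $ j)
                 \<and> (c x)^2 = \<kappa> - \<mu> * norm2_1form a b x" using cov by blast
  have kap: "\<And>x. x \<in> U \<Longrightarrow> h' (tcoord x)^2 = \<kappa> - \<mu> * h (tcoord x)^2"
  proof -
    fix x assume xu: "x \<in> U"
    have hs: "((\<lambda>s. h (tcoord x + s)) has_real_derivative h' (tcoord x)) (at 0)"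
      using DERIV_shift[of h "h' (tcoord x)" 0 "tcoord x"] hder[OF xu] by (simp add: add.commute)
    have "pd (\<lambda>z. b z $ None) None x = pd (\<lambda>z. h (tcoord z)) None x"
      by (rule pd_local[OF oU xu]) (simp add: beta_form)
    also have "\<dots> = deriv (\<lambda>s. h (tcoord x + s)) 0" by (simp add: pd_def tcoord_add_None)
    also have "\<dots> = h' (tcoord x)" using hs by (rule DERIV_imp_deriv)
    finally have pdb: "pd (\<lambda>z. b z $ None) None x = h' (tcoord x)" .
    have "cov_deriv_1form a b None None x = h' (tcoord x)"
      unfolding cov_deriv_1form_def sum_option using xu by (simp add: pdb C4 beta_form)
    then have cx: "c x = h' (tcoord x)" using c xu aNN[OF xu] by force
    have "norm2_1form a b x = h (tcoord x)^2"
      unfolding norm2_1form_def sum_option using xu by (simp add: beta_form iNx power2_eq_square)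
    then show "h' (tcoord x)^2 = \<kappa> - \<mu> * h (tcoord x)^2" using c xu cx by force
  qed
  show ?thesis unfolding const_sectional_curvature_on_def
  proof (intro ballI allI impI)
    fix y u v :: "real^'m" assume yv: "y \<in> V" and ind: "\<forall>s t. s *\<^sub>R u + t *\<^sub>R v = 0 \<longrightarrow> s = 0 \<and> t = 0"
    obtain t0 where t0: "t0 \<in> I" using I by blast
    define x :: "real^('m option)" where "x = (\<chi> i. case i of None \<Rightarrow> t0 | Some p \<Rightarrow> y $ p)"
    have tx: "tcoord x = t0" and fx: "fibre_coord x = y" unfolding x_def by (rule mkpt)+
    have xu: "x \<in> U" using U t0 yv tx fx by simp
    define Ve :: "real^('m option)" where "Ve = (\<chi> i. case i of None \<Rightarrow> 0 | Some p \<Rightarrow> v $ p)"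
    define Q where "Q p q = metric_ip ab y p q" for p q
    define L where "L p = (\<Sum>q\<in>UNIV. ab y $ p $ q * v $ q)" for p
    define S where "S m p = (\<Sum>r\<in>UNIV. \<Sum>q\<in>UNIV. riemann ab m r p q y * v $ r * v $ q)" for m p
    have keyS: "S m p = \<kappa> * ((if m = p then Q v v else 0) - v $ m * L p)" for m p
    proof -
      have "riemann_curv a (Some m) (Some p) x Ve
          = (\<Sum>r\<in>UNIV. \<Sum>q\<in>UNIV. riemann a (Some m) (Some r) (Some p) (Some q) x * v $ r * v $ q)"
        unfolding riemann_curv_def sum_option Ve_def by simp
      also have "\<dots> = (\<Sum>r\<in>UNIV. \<Sum>q\<in>UNIV. riemann ab m r p q y * v $ r * v $ q
           - h' t0^2 * ((if m = p then ab y $ r $ q * v $ r * v $ q else 0)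
                        - (if m = q then ab y $ r $ p * v $ r * v $ q else 0)))"
        by (rule sum.cong[OF refl], rule sum.cong[OF refl], simp add: R[OF xu] tx fx algebra_simps cong: if_cong split: if_split)
      also have "\<dots> = (\<Sum>r\<in>UNIV. \<Sum>q\<in>UNIV. riemann ab m r p q y * v $ r * v $ q)
           - h' t0^2 * ((\<Sum>r\<in>UNIV. \<Sum>q\<in>UNIV. (if m = p then ab y $ r $ q * v $ r * v $ q else 0))
                      - (\<Sum>r\<in>UNIV. \<Sum>q\<in>UNIV. (if m = q then ab y $ r $ p * v $ r * v $ q else 0)))"
        by (simp only: sum_subtractf sum_distrib_left right_diff_distrib)
      also have "(\<Sum>r\<in>UNIV. \<Sum>q\<in>UNIV. (if m = p then ab y $ r $ q * v $ r * v $ q else 0)) = (if m = p then Q v v else 0)"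
        by (simp add: Q_def metric_ip_def)
      also have "(\<Sum>r\<in>UNIV. \<Sum>q\<in>UNIV. (if m = q then ab y $ r $ p * v $ r * v $ q else 0)) = v $ m * L p"
      proof -
        have "(\<Sum>r\<in>UNIV. \<Sum>q\<in>UNIV. (if m = q then ab y $ r $ p * v $ r * v $ q else 0))
            = (\<Sum>r\<in>UNIV. v $ m * (ab y $ p $ r * v $ r))"
          by (rule sum.cong[OF refl]) (simp add: absym[OF yv, of _ p])
        then show ?thesis by (simp add: L_def sum_distrib_left)
      qed
      also have "(\<Sum>r\<in>UNIV. \<Sum>q\<in>UNIV. riemann ab m r p q y * v $ r * v $ q) = S m p" by (simp add: S_def)
      finally have lhs: "riemann_curv a (Some m) (Some p) x Ve = S m p - h' t0^2 * ((if m = p then Q v v else 0) - v $ m * L p)" .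
      have mi: "metric_ip a x Ve Ve = h t0^2 * Q v v"
        by (simp add: metric_ip_def Q_def sum_option Ve_def aSS[OF xu] tx fx sum_distrib_left mult_ac)
      have lo: "lower a x Ve (Some p) = h t0^2 * L p"
        by (simp add: lower_def L_def sum_option Ve_def aSS[OF xu] tx fx sum_distrib_left mult_ac)
      have "riemann_curv a (Some m) (Some p) x Ve = \<mu> * (h t0^2 * Q v v * (if m = p then 1 else 0) - v $ m * (h t0^2 * L p))"
        using curv xu mi lo by (simp add: Ve_def)
      then have "S m p = (h' t0^2 + \<mu> * h t0^2) * ((if m = p then Q v v else 0) - v $ m * L p)"
        using lhs by (simp add: algebra_simps)
      then show ?thesis using kap[OF xu] tx by simp
    qed
    have symQ: "Q p q = Q q p" for p q
    proof -
      have "Q p q = (\<Sum>j\<in>UNIV. \<Sum>i\<in>UNIV. ab y $ i $ j * p $ i * q $ j)"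
        unfolding Q_def metric_ip_def by (rule sum.swap)
      also have "\<dots> = Q q p" unfolding Q_def metric_ip_def
        by (rule sum.cong[OF refl], rule sum.cong[OF refl]) (subst absym[OF yv], simp add: mult_ac)
      finally show ?thesis .
    qed
    have bil: "Q (\<alpha> *\<^sub>R u + \<beta> *\<^sub>R v) (\<alpha> *\<^sub>R u + \<beta> *\<^sub>R v)
        = \<alpha>^2 * Q u u + \<alpha> * \<beta> * (Q u v + Q v u) + \<beta>^2 * Q v v" for \<alpha> \<beta>
    proof -
      have "Q (\<alpha> *\<^sub>R u + \<beta> *\<^sub>R v) (\<alpha> *\<^sub>R u + \<beta> *\<^sub>R v)
         = (\<Sum>i\<in>UNIV. \<Sum>j\<in>UNIV. \<alpha>^2 * (ab y $ i $ j * u $ i * u $ j) + \<alpha> * \<beta> * (ab y $ i $ j * u $ i * v $ j)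
             + \<alpha> * \<beta> * (ab y $ i $ j * v $ i * u $ j) + \<beta>^2 * (ab y $ i $ j * v $ i * v $ j))"
        unfolding Q_def metric_ip_def by (intro sum.cong refl) (simp add: algebra_simps power2_eq_square)
      also have "\<dots> = \<alpha>^2 * Q u u + \<alpha> * \<beta> * (Q u v + Q v u) + \<beta>^2 * Q v v"
        unfolding Q_def metric_ip_def by (simp only: sum.distrib sum_distrib_left distrib_left)
      finally show ?thesis .
    qed
    have "v \<noteq> 0"
    proof
      assume "v = 0" then have "0 *\<^sub>R u + 1 *\<^sub>R v = 0" by simp
      then have "(0::real) = 0 \<and> (1::real) = 0" using ind by blast
      then show False by simp
    qed
    then have Qv: "Q v v > 0" unfolding Q_def metric_ip_def using abpos[OF yv] by blast
    define w where "w = Q v v *\<^sub>R u + (- Q u v) *\<^sub>R v"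
    have "w \<noteq> 0"
    proof
      assume "w = 0" then have "Q v v *\<^sub>R u + (- Q u v) *\<^sub>R v = 0" by (simp add: w_def)
      then have "Q v v = 0" using ind by blast
      then show False using Qv by simp
    qed
    then have Qw: "Q w w > 0" unfolding Q_def metric_ip_def using abpos[OF yv] by blast
    have "Q w w = Q v v * (Q u u * Q v v - (Q u v)^2)"
      unfolding w_def bil symQ[of v u] by (simp add: power2_eq_square algebra_simps)
    then have Dpos: "Q u u * Q v v - (Q u v)^2 > 0" using Qw Qv by (simp add: zero_less_mult_iff)
    have Sswap: "S m p = (\<Sum>q\<in>UNIV. \<Sum>r\<in>UNIV. riemann ab m r p q y * v $ r * v $ q)" for m p
      unfolding S_def by (rule sum.swap)
    have LM: "(\<Sum>p\<in>UNIV. u $ p * L p) = Q u v"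
      by (simp add: L_def Q_def metric_ip_def sum_distrib_left mult_ac)
    have "(\<Sum>i\<in>UNIV. \<Sum>m\<in>UNIV. \<Sum>p\<in>UNIV. \<Sum>q\<in>UNIV. \<Sum>r\<in>UNIV.
        ab y $ i $ m * riemann ab m r p q y * u $ i * u $ p * v $ q * v $ r)
      = (\<Sum>i\<in>UNIV. \<Sum>m\<in>UNIV. \<Sum>p\<in>UNIV. ab y $ i $ m * u $ i * u $ p * S m p)"
      by (simp add: Sswap sum_distrib_left mult_ac)
    also have "\<dots> = (\<Sum>i\<in>UNIV. \<Sum>m\<in>UNIV. \<kappa> * Q v v * (ab y $ i $ m * u $ i * u $ m)
                    - \<kappa> * Q u v * (ab y $ i $ m * u $ i * v $ m))"
    proof (intro sum.cong refl)
      fix i m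
      have "(\<Sum>p\<in>UNIV. ab y $ i $ m * u $ i * u $ p * S m p)
          = (\<Sum>p\<in>UNIV. \<kappa> * Q v v * (ab y $ i $ m * u $ i) * (if m = p then u $ p else 0)
               - \<kappa> * (ab y $ i $ m * u $ i * v $ m) * (u $ p * L p))"
        by (rule sum.cong[OF refl]) (simp add: keyS algebra_simps)
      also have "\<dots> = \<kappa> * Q v v * (ab y $ i $ m * u $ i * u $ m) - \<kappa> * (ab y $ i $ m * u $ i * v $ m) * Q u v"
        by (simp add: sum_subtractf sum_distrib_left[symmetric] LM)
      finally show "(\<Sum>p\<in>UNIV. ab y $ i $ m * u $ i * u $ p * S m p)
          = \<kappa> * Q v v * (ab y $ i $ m * u $ i * u $ m) - \<kappa> * Q u v * (ab y $ i $ m * u $ i * v $ m)"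
        by simp
    qed
    also have "\<dots> = \<kappa> * Q v v * (\<Sum>i\<in>UNIV. \<Sum>m\<in>UNIV. ab y $ i $ m * u $ i * u $ m)
         - \<kappa> * Q u v * (\<Sum>i\<in>UNIV. \<Sum>m\<in>UNIV. ab y $ i $ m * u $ i * v $ m)"
      by (simp only: sum_subtractf sum_distrib_left)
    also have "\<dots> = \<kappa> * (Q u u * Q v v - (Q u v)^2)"
    proof -
      have Quu: "(\<Sum>i\<in>UNIV. \<Sum>m\<in>UNIV. ab y $ i $ m * u $ i * u $ m) = Q u u" by (simp add: Q_def metric_ip_def)
      have Quv: "(\<Sum>i\<in>UNIV. \<Sum>m\<in>UNIV. ab y $ i $ m * u $ i * v $ m) = Q u v" by (simp add: Q_def metric_ip_def)
      show ?thesis unfolding Quu Quv by (simp add: power2_eq_square algebra_simps)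
    qed
    finally have N: "(\<Sum>i\<in>UNIV. \<Sum>m\<in>UNIV. \<Sum>p\<in>UNIV. \<Sum>q\<in>UNIV. \<Sum>r\<in>UNIV.
        ab y $ i $ m * riemann ab m r p q y * u $ i * u $ p * v $ q * v $ r) = \<kappa> * (Q u u * Q v v - (Q u v)^2)" .
    show "sectional_curvature ab y u v = \<kappa>"
      unfolding sectional_curvature_def N using Dpos by (simp add: Q_def)
  qed
qed

end
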